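(* Let $R$ be an associative unital division ring over a field of characteristic $0$ with a derivation $'$ (write $\varphi^{(k)}$ for the $k$-th derivative). Let $\varphi\in R$ and for $n\geq1$ put $$\Theta_n=\bigl(\varphi^{(i+j-2)}\bigr)_{1\leq i,j\leq n},\qquad \theta_n=|\Theta_n|_{nn},$$ with the convention $\theta_0^{-1}:=0$, assuming all quasideterminants involved are defined and all $\theta_n$ invertible. Then for all $n\geq1$, $$\bigl(\theta_n'\theta_n^{-1}\bigr)'=\theta_{n+1}\theta_n^{-1}-\theta_n\theta_{n-1}^{-1}.$$
   Context: For an $n\times n$ matrix $X$ over $R$, $|X|_{ij}=x_{ij}-r_i^j(X^{ij})^{-1}c_j^i$, where $X^{ij}$ is $X$ with row $i$ and column $j$ removed, $r_i^j$ is row $i$ without its $j$-th entry and $c_j^i$ is column $j$ without its $i$-th entry; for $n=1$, $|X|_{11}=x_{11}$. *)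

theory Defs
  imports "Jordan_Normal_Form.Determinant"
begin

definition derivation :: "('a::ring \<Rightarrow> 'a) \<Rightarrow> bool" where
  "derivation D \<longleftrightarrow> (\<forall>a b. D (a + b) = D a + D b) \<and> (\<forall>a b. D (a * b) = D a * b + a * D b)"

definition mat_inv :: "'a::semiring_1 mat \<Rightarrow> 'a mat" where
  "mat_inv B = (SOME C. inverts_mat B C \<and> inverts_mat C B)"

definition qdet_defined :: "'a::semiring_1 mat \<Rightarrow> nat \<Rightarrow> nat \<Rightarrow> bool" where
  "qdet_defined X i j \<longleftrightarrow> dim_row X = dim_col X \<and> i < dim_row X \<and> j < dim_col X \<and>
     (dim_row X = 1 \<or> invertible_mat (mat_delete X i j))"

text \<open>|X|_{ij} = x_{ij} - r_i^j (X^{ij})^{-1} c_j^i (indices 0-based).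
  For a 1x1 matrix the sum is empty, so |X|_{11} = x_{11}.\<close>
definition qdet :: "'a::ring_1 mat \<Rightarrow> nat \<Rightarrow> nat \<Rightarrow> 'a" where
  "qdet X i j = X $$ (i, j) -
     (\<Sum>k < dim_col X - 1. \<Sum>l < dim_row X - 1.
        X $$ (i, insert_index j k) * mat_inv (mat_delete X i j) $$ (k, l) * X $$ (insert_index i l, j))"

text \<open>Theta_n = (phi^{(i+j-2)})_{1<=i,j<=n}; with 0-based indices the (i,j) entry is D^(i+j) phi.\<close>
definition Theta :: "('a \<Rightarrow> 'a) \<Rightarrow> 'a \<Rightarrow> nat \<Rightarrow> 'a mat" where
  "Theta D \<phi> n = mat n n (\<lambda>(i, j). (D ^^ (i + j)) \<phi>)"

definition theta :: "('a::ring_1 \<Rightarrow> 'a) \<Rightarrow> 'a \<Rightarrow> nat \<Rightarrow> 'a" where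
  "theta D \<phi> n = qdet (Theta D \<phi> n) (n - 1) (n - 1)"

definition theta_inv :: "('a::division_ring \<Rightarrow> 'a) \<Rightarrow> 'a \<Rightarrow> nat \<Rightarrow> 'a" where
  "theta_inv D \<phi> n = (if n = 0 then 0 else inverse (theta D \<phi> n))"

end

theory Submission
  imports Defs
begin

locale hank =
  fixes D :: "'a::{division_ring, ring_char_0} \<Rightarrow> 'a" and \<phi> :: 'a
  assumes der: "derivation D"
    and qd: "\<forall>m\<ge>1. qdet_defined (Theta D \<phi> m) (m - 1) (m - 1)"
    and nz: "\<forall>m\<ge>1. theta D \<phi> m \<noteq> 0"
begin

lemma D_add: "D (a + b) = D a + D b" using der unfolding derivation_def by blast
lemma D_mult: "D (a * b) = D a * b + a * D b" using der unfolding derivation_def by blast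
lemma D_zero[simp]: "D 0 = 0" using D_add[of 0 0] by simp
lemma D_one[simp]: "D 1 = 0" using D_mult[of 1 1] by simp
lemma D_uminus: "D (- a) = - D a"
  using D_add[of a "-a"] by (simp add: eq_neg_iff_add_eq_0 add.commute)
lemma D_diff: "D (a - b) = D a - D b"
  using D_add[of a "-b"] D_uminus[of b] by simp
lemma D_sum: "D (sum f A) = sum (\<lambda>x. D (f x)) A"
  by (induction A rule: infinite_finite_induct) (auto simp: D_add)
lemma D_inverse: assumes "x \<noteq> 0" shows "D (inverse x) = - (inverse x * D x * inverse x)"
proof -
  have "0 = D (x * inverse x)" using assms by simp
  also have "\<dots> = D x * inverse x + x * D (inverse x)" by (rule D_mult)
  finally have "x * D (inverse x) = - (D x * inverse x)" by (simp add: eq_neg_iff_add_eq_0 add.commute)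
  then have "inverse x * (x * D (inverse x)) = inverse x * (- (D x * inverse x))" by simp
  then show ?thesis using assms by (simp add: mult.assoc[symmetric])
qed

definition "m k = (D ^^ k) \<phi>"
lemma D_m[simp]: "D (m k) = m (Suc k)" by (simp add: m_def)

definition "B n = mat_inv (Theta D \<phi> n)"

lemma Theta_inv:
  assumes "n \<ge> 1"
  shows "Theta D \<phi> n * B n = 1\<^sub>m n" "B n * Theta D \<phi> n = 1\<^sub>m n"
    "B n \<in> carrier_mat n n"
proof -
  have "qdet_defined (Theta D \<phi> (Suc n)) n n" using qd[rule_format, of "Suc n"] by simp
  then have inv: "invertible_mat (mat_delete (Theta D \<phi> (Suc n)) n n)"
    using assms unfolding qdet_defined_def by (simp add: Theta_def)
  have "mat_delete (Theta D \<phi> (Suc n)) n n = Theta D \<phi> n"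
    by (rule eq_matI) (auto simp: mat_delete_def Theta_def)
  with inv have inv2: "invertible_mat (Theta D \<phi> n)" by simp
  then obtain C where "inverts_mat (Theta D \<phi> n) C \<and> inverts_mat C (Theta D \<phi> n)"
    unfolding invertible_mat_def by blast
  then have "inverts_mat (Theta D \<phi> n) (B n) \<and> inverts_mat (B n) (Theta D \<phi> n)"
    unfolding B_def mat_inv_def by (rule someI)
  then have 1: "Theta D \<phi> n * B n = 1\<^sub>m n" and 2: "B n * Theta D \<phi> n = 1\<^sub>m (dim_row (B n))"
    unfolding inverts_mat_def by (auto simp: Theta_def)
  have c: "dim_col (B n) = n" using arg_cong[OF 1, of dim_col] by simp
  have r: "dim_row (B n) = n" using arg_cong[OF 2, of dim_col] by (simp add: Theta_def)
  show "Theta D \<phi> n * B n = 1\<^sub>m n" by (fact 1)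
  show "B n * Theta D \<phi> n = 1\<^sub>m n" using 2 r by simp
  show "B n \<in> carrier_mat n n" using r c by auto
qed

lemma BT: assumes "k < n" "j < n"
  shows "(\<Sum>i<n. B n $$ (k, i) * m (i + j)) = (if k = j then 1 else 0)"
proof -
  have n: "n \<ge> 1" using assms by auto
  have "(B n * Theta D \<phi> n) $$ (k, j) = (if k = j then 1 else 0)"
    using Theta_inv(2)[OF n] assms by simp
  moreover have "(B n * Theta D \<phi> n) $$ (k, j) = (\<Sum>i<n. B n $$ (k, i) * m (i + j))"
    using Theta_inv(3)[OF n] assms
    by (auto simp: Theta_def scalar_prod_def m_def atLeast0LessThan intro!: sum.cong)
  ultimately show ?thesis by simp
qed

lemma TB: assumes "i < n" "l < n"
  shows "(\<Sum>j<n. m (i + j) * B n $$ (j, l)) = (if i = l then 1 else 0)"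
proof -
  have n: "n \<ge> 1" using assms by auto
  have "(Theta D \<phi> n * B n) $$ (i, l) = (if i = l then 1 else 0)"
    using Theta_inv(1)[OF n] assms by simp
  moreover have "(Theta D \<phi> n * B n) $$ (i, l) = (\<Sum>j<n. m (i + j) * B n $$ (j, l))"
    using Theta_inv(3)[OF n] assms
    by (auto simp: Theta_def scalar_prod_def m_def atLeast0LessThan intro!: sum.cong)
  ultimately show ?thesis by simp
qed


definition "P n i = (if i < n then - (\<Sum>k<n. m (n + k) * B n $$ (k, i)) else if i = n then 1 else 0)"
definition "S n j = (\<Sum>i<Suc n. P n i * m (i + j))"
definition "h n = theta D \<phi> (Suc n)"
definition "hi n = theta_inv D \<phi> n"

lemma P_n[simp]: "P n n = 1" by (simp add: P_def)
lemma P_gt[simp]: "n < i \<Longrightarrow> P n i = 0" by (simp add: P_def)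

lemma sum_delta_r: fixes q :: "nat \<Rightarrow> 'a" shows "l < k \<Longrightarrow> (\<Sum>i<k. q i * (if i = l then 1 else 0)) = q l"
proof -
  assume "l < k"
  have "(\<Sum>i<k. q i * (if i = l then 1 else 0)) = (\<Sum>i<k. if i = l then q i else 0)"
    by (rule sum.cong) auto
  then show ?thesis using \<open>l < k\<close> by simp
qed

lemma S_expand: "S n j = (\<Sum>i<n. P n i * m (i + j)) + m (n + j)"
  by (simp add: S_def)

lemma S_orth: assumes "j < n" shows "S n j = 0"
proof -
  have "(\<Sum>i<n. P n i * m (i + j)) = (\<Sum>i<n. - (\<Sum>k<n. m (n + k) * B n $$ (k, i)) * m (i + j))"
    by (simp add: P_def)
  also have "\<dots> = - (\<Sum>k<n. m (n + k) * (\<Sum>i<n. B n $$ (k, i) * m (i + j)))"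
    apply (simp add: sum_distrib_left sum_distrib_right sum_negf mult.assoc)
    apply (subst sum.swap) apply simp done
  also have "\<dots> = - (\<Sum>k<n. m (n + k) * (if k = j then 1 else 0))"
    using BT assms by simp
  also have "\<dots> = - m (n + j)" using assms sum_delta_r[of j n "\<lambda>k. m (n + k)"] by simp
  finally show ?thesis by (simp add: S_expand)
qed

lemma h_S: "h n = S n n"
proof -
  have del: "mat_delete (Theta D \<phi> (Suc n)) n n = Theta D \<phi> n"
    by (rule eq_matI) (auto simp: mat_delete_def Theta_def)
  have "h n = m (n + n) - (\<Sum>k<n. \<Sum>l<n. m (n + k) * B n $$ (k, l) * m (l + n))"
    unfolding h_def theta_def qdet_def
    apply (simp only: del B_def[symmetric] diff_Suc_1)
    by (simp add: Theta_def m_def)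
  also have "\<dots> = S n n"
    apply (simp add: S_expand P_def sum_distrib_left sum_distrib_right sum_negf mult.assoc)
    apply (subst sum.swap) apply simp done
  finally show ?thesis .
qed

lemma S_top: "S n n = h n" by (simp add: h_S)

lemma h_nz: "h n \<noteq> 0" using nz by (simp add: h_def)

lemma hi_Suc: "hi (Suc n) = inverse (h n)" by (simp add: hi_def theta_inv_def h_def)
lemma hi_0[simp]: "hi 0 = 0" by (simp add: hi_def theta_inv_def)

lemma uniq: assumes "\<And>j. j < k \<Longrightarrow> (\<Sum>i<k. q i * m (i + j)) = 0" "l < k"
  shows "q l = 0"
proof -
  have "0 = (\<Sum>j<k. (\<Sum>i<k. q i * m (i + j)) * B k $$ (j, l))" using assms(1) by simp
  also have "\<dots> = (\<Sum>i<k. q i * (\<Sum>j<k. m (i + j) * B k $$ (j, l)))"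
    apply (simp add: sum_distrib_left sum_distrib_right mult.assoc)
    apply (subst sum.swap) apply simp done
  also have "\<dots> = (\<Sum>i<k. q i * (if i = l then 1 else 0))" using TB assms(2) by simp
  also have "\<dots> = q l" using assms(2) by (rule sum_delta_r)
  finally show ?thesis by simp
qed


lemma DS: "D (S n j) = (\<Sum>i<n. D (P n i) * m (i + j)) + S n (Suc j)"
proof -
  have "D (S n j) = (\<Sum>i<Suc n. D (P n i) * m (i + j)) + (\<Sum>i<Suc n. P n i * m (i + Suc j))"
    unfolding S_def by (simp only: D_sum D_mult sum.distrib D_m add_Suc_right)
  then show ?thesis by (simp add: S_def)
qed

lemma S_low: "j \<le> n \<Longrightarrow> S n j = (if j < n then 0 else h n)"
  using S_orth S_top by (cases "j < n") auto

lemma DP: assumes "i < n" shows "D (P n i) = - (h n * hi n * P (n - 1) i)"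
proof -
  obtain k where n: "n = Suc k" using assms by (cases n) auto
  define q where "q i = D (P n i) + h n * hi n * P k i" for i
  have "q i = 0"
  proof (rule uniq[OF _ assms])
    fix j assume j: "j < n"
    have "(\<Sum>i<n. q i * m (i + j)) = (\<Sum>i<n. D (P n i) * m (i + j)) + h n * hi n * S k j"
      unfolding q_def S_def n by (simp add: sum.distrib distrib_right distrib_left sum_distrib_left mult.assoc)
    also have "\<dots> = - S n (Suc j) + h n * hi n * S k j"
      using DS[of n j] S_orth[OF j] by (simp add: eq_neg_iff_add_eq_0)
    also have "\<dots> = 0"
    proof (cases "j < k")
      case True then show ?thesis using S_low[of "Suc j" n] S_low[of j k] n by simp
    next
      case False
      then have "j = k" using j n by simp
      then show ?thesis using S_low[of "Suc j" n] S_low[of j k] n hi_Suc h_nz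
        by (simp add: mult.assoc)
    qed
    finally show "(\<Sum>i<n. q i * m (i + j)) = 0" .
  qed
  then show ?thesis unfolding q_def n by (simp add: eq_neg_iff_add_eq_0)
qed


definition "a n = (if n = 0 then 0 else P n (n - 1)) - P (Suc n) n"
definition "v n i = (if i = 0 then 0 else P n (i - 1)) - P (Suc n) i"

lemma pv: assumes "j \<le> n" shows "(\<Sum>i<Suc n. v n i * m (i + j)) = S n (Suc j)"
proof -
  have v0: "v n (Suc n) = 0" by (simp add: v_def)
  have "(\<Sum>i<Suc (Suc n). v n i * m (i + j))
      = (\<Sum>i<Suc (Suc n). (if i = 0 then 0 else P n (i - 1)) * m (i + j)) - S (Suc n) j"
    unfolding v_def S_def by (simp only: left_diff_distrib sum_subtractf)
  also have "(\<Sum>i<Suc (Suc n). (if i = 0 then 0 else P n (i - 1)) * m (i + j)) = S n (Suc j)"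
    unfolding sum.lessThan_Suc_shift[of _ "Suc n"] S_def by simp
  also have "S (Suc n) j = 0" using S_orth assms by simp
  finally show ?thesis using v0 by simp
qed

lemma Dh: "D (h n) = a n * h n"
proof -
  define T where "T = (\<Sum>i<n. P (n - 1) i * m (i + n))"
  have "D (h n) = D (S n n)" by (simp only: h_S)
  also have "\<dots> = - (h n * hi n * T) + S n (Suc n)"
    unfolding DS T_def
    by (simp add: DP sum_negf sum_distrib_left mult.assoc)
  finally have dh: "D (h n) = - (h n * hi n * T) + S n (Suc n)" .
  define w where "w i = v n i - a n * P n i - h n * hi n * P (n - 1) i" for i
  define R where "R j = (\<Sum>i<Suc n. P (n - 1) i * m (i + j))" for j
  have hhR: "h n * hi n * R j = h n * hi n * S (n - 1) j" for j
  proof (cases n)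
    case 0 then show ?thesis by simp
  next
    case (Suc k) then show ?thesis by (simp add: R_def S_def)
  qed
  have wn: "w n = 0"
  proof (cases n)
    case 0 then show ?thesis by (simp add: w_def v_def a_def)
  next
    case (Suc k) then show ?thesis by (simp add: w_def v_def a_def)
  qed
  have W: "(\<Sum>i<Suc n. w i * m (i + j)) = S n (Suc j) - a n * S n j - h n * hi n * S (n - 1) j"
    if "j \<le> n" for j
  proof -
    have "(\<Sum>i<Suc n. w i * m (i + j)) = (\<Sum>i<Suc n. v n i * m (i + j)) - a n * S n j - h n * hi n * R j"
      unfolding w_def S_def R_def
      by (simp only: left_diff_distrib sum_subtractf sum_distrib_left mult.assoc)
    then show ?thesis using pv[OF that] hhR by simp
  qed
  have w0: "w i = 0" if "i < n" for i
  proof (rule uniq[OF _ that])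
    fix j assume j: "j < n"
    obtain k where n: "n = Suc k" using j by (cases n) auto
    have "(\<Sum>i<n. w i * m (i + j)) = (\<Sum>i<Suc n. w i * m (i + j))" using wn by simp
    also have "\<dots> = S n (Suc j) - h n * hi n * S k j" using W[of j] j S_orth[OF j] n by simp
    also have "\<dots> = 0"
    proof (cases "j < k")
      case True then show ?thesis using S_low[of "Suc j" n] S_low[of j k] n by simp
    next
      case False
      then have "j = k" using j n by simp
      then show ?thesis using S_low[of "Suc j" n] S_low[of j k] n hi_Suc h_nz
        by (simp add: mult.assoc)
    qed
    finally show "(\<Sum>i<n. w i * m (i + j)) = 0" .
  qed
  have "(\<Sum>i<Suc n. w i * m (i + n)) = 0" using wn w0 by simp
  then have e1: "S n (Suc n) - a n * h n - h n * hi n * S (n - 1) n = 0"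
    using W[of n] S_top by simp
  have eqT: "h n * hi n * S (n - 1) n = h n * hi n * T"
  proof (cases n)
    case 0 then show ?thesis by simp
  next
    case (Suc k) then show ?thesis by (simp add: S_def T_def)
  qed
  from e1 have "S n (Suc n) - a n * h n - h n * hi n * T = 0" by (simp only: eqT)
  then have "S n (Suc n) = a n * h n + h n * hi n * T" by (simp add: diff_eq_eq)
  with dh show ?thesis by simp
qed

lemma Da: "D (a n) = h (Suc n) * inverse (h n) - h n * hi n"
proof -
  have 1: "D (if n = 0 then 0 else P n (n - 1)) = - (h n * hi n)"
    by (cases n) (auto simp: DP)
  have 2: "D (P (Suc n) n) = - (h (Suc n) * inverse (h n))"
    by (simp add: DP hi_Suc)
  show ?thesis unfolding a_def D_diff 1 2 by simp
qed

lemma main: "D (D (h n) * inverse (h n)) = h (Suc n) * inverse (h n) - h n * hi n"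
  using Dh Da h_nz by (simp add: mult.assoc)

end

theorem proposition4p11:
  fixes D :: "'a::{division_ring, ring_char_0} \<Rightarrow> 'a" and \<phi> :: 'a
  assumes "derivation D"
    and "\<forall>m\<ge>1. qdet_defined (Theta D \<phi> m) (m - 1) (m - 1)"
    and "\<forall>m\<ge>1. theta D \<phi> m \<noteq> 0"
  shows "\<forall>n\<ge>1. D (D (theta D \<phi> n) * theta_inv D \<phi> n)
           = theta D \<phi> (n + 1) * theta_inv D \<phi> n - theta D \<phi> n * theta_inv D \<phi> (n - 1)"
proof (intro allI impI)
  interpret hank D \<phi> using assms by unfold_locales
  fix N :: nat assume "N \<ge> 1"
  then obtain n where N: "N = Suc n" by (cases N) auto
  show "D (D (theta D \<phi> N) * theta_inv D \<phi> N)
           = theta D \<phi> (N + 1) * theta_inv D \<phi> N - theta D \<phi> N * theta_inv D \<phi> (N - 1)"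
    using main[of n] unfolding N h_def hi_def theta_inv_def by simp
qed

end
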